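(* In the bandit setting, let $\beta=\frac1K$ and run Gaptron with gap map $a(\mathbf W_t,\mathbf x_t)=1-\max\{\mathbb 1[m_t^\star>\beta],\,m_t^\star\}$, exploration rate $\gamma=\min\Big\{1,\sqrt{\frac{K^3X^2D^2}{2(1-\beta)(K-1)T}}\Big\}$, learning rate $\eta=\frac{\gamma(1-\beta)}{K^2X^2}$, and the bandit multiclass hinge loss $$\ell_t(\mathbf W)=\begin{cases}\frac{\mathbb 1[y'_t=y_t]}{p'_t(y'_t)}\max\{1-m_t(\mathbf W,y_t),0\}&\text{if } m_t^\star\le\beta,\\ \frac{\mathbb 1[y'_t=y_t]}{p'_t(y'_t)}\max\{1-m_t(\mathbf W,y_t),0\}&\text{if } y_t^\star\ne y_t\text{ and } m_t^\star>\beta,\\ 0&\text{if } y'_t=y_t^\star=y_t\text{ and } m_t^\star>\beta.\end{cases}$$ Then for every $\mathbf U\in\mathcal W$, $$\mathbb E\Big[\sum_{t=1}^T\mathbb 1[y'_t\ne y_t]\Big]\le\mathbb E\Big[\sum_{t=1}^T\ell_t(\mathbf U)\Big]+\max\Big\{\frac{K^3X^2D^2}{K-1},\ 2KXD\sqrt{\frac T2}\Big\}.$$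
   Context: Setting and notation. Fix integers $K\ge 2$, $d\ge1$, $T\ge1$ and reals $X>0$, $D>0$. Matrices $\mathbf W\in\mathbb{R}^{K\times d}$ have rows $\mathbf W^1,\dots,\mathbf W^K\in\mathbb{R}^d$ and are identified with vectors in $\mathbb{R}^{Kd}$; $\langle\cdot,\cdot\rangle$ is the Euclidean inner product and $\|\cdot\|$ the Euclidean (Frobenius) norm. $\mathcal W=\{\mathbf W:\|\mathbf W\|\le D\}$. $\mathbf e_k$ is the $k$-th standard basis vector of $\mathbb R^K$ and $\mathbf 1\in\mathbb R^K$ the all-ones vector. In each round $t=1,\dots,T$ the environment chooses a label $y_t\in\{1,\dots,K\}$ and a feature vector $\mathbf x_t\in\mathbb R^d$ with $\|\mathbf x_t\|\le X$ (possibly depending on the learner's past predictions $y'_1,\dots,y'_{t-1}$ but not on its current random draw); the learner sees $\mathbf x_t$, outputs a random label $y'_t$, and then observes $y_t$ (full-information setting) or only $\mathbb 1[y'_t\ne y_t]$ (bandit setting). Gaptron, with learning rate $\eta>0$, exploration rate $\gamma\in[0,1]$, gap map $a:\mathbb R^{K\times d}\times\mathbb R^d\to[0,1]$ and loss functions $\ell_t$: set $\mathbf W_1=\mathbf 0$; for $t=1,\dots,T$: let $y_t^\star=\arg\max_k\langle \mathbf W_t^k,\mathbf x_t\rangle$ (ties broken arbitrarily), $a_t=a(\mathbf W_t,\mathbf x_t)$, $\mathbf p'_t=(1-\max\{a_t,\gamma\})\mathbf e_{y_t^\star}+\max\{a_t,\gamma\}\frac1K\mathbf 1$; draw $y'_t\sim\mathbf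 p'_t$ ($p'_t(k)$ denotes the probability of label $k$); set $\mathbf g_t=\nabla\ell_t(\mathbf W_t)$; update $\mathbf W_{t+1}=\arg\min_{\mathbf W\in\mathcal W}\ \eta\langle\mathbf g_t,\mathbf W\rangle+\frac12\|\mathbf W-\mathbf W_t\|^2$. $\mathbb E$ denotes expectation over the learner's randomization. Margins: $m_t(\mathbf W,y)=\langle\mathbf W^y,\mathbf x_t\rangle-\max_{k\ne y}\langle\mathbf W^k,\mathbf x_t\rangle$ and $m_t^\star=\max_k m_t(\mathbf W_t,k)$, where $\mathbf W_t$ is Gaptron's current iterate; in the definition of $\ell_t$ the case distinction uses $y_t^\star$ and $m_t^\star$ computed from $\mathbf W_t$. Where $\ell_t$ is nonzero and the hinge is active, $\mathbf g_t=\frac{\mathbb 1[y'_t=y_t]}{p'_t(y'_t)}(\mathbf e_{\tilde k}-\mathbf e_{y_t})\otimes\mathbf x_t$ with $\tilde k=\arg\max_{k\ne y_t}\langle\mathbf W_t^k,\mathbf x_t\rangle$, where $\mathbf v\otimes\mathbf x$ is the $K\times d$ matrix with rows $v_k\mathbf x$. *)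

theory Defs
  imports "HOL-Analysis.Analysis" "HOL-Probability.Probability"
begin

text \<open>Labels are elements of a finite type 'k (K = CARD('k)); features are in real^'d;
  a weight matrix W is an element of real^'d^'k (row W$k), whose norm is the Frobenius norm.\<close>

type_synonym ('d,'k) wmat = "real^'d^'k"

definition margin :: "('d::finite,'k::finite) wmat \<Rightarrow> real^'d \<Rightarrow> 'k \<Rightarrow> real" where
  "margin W x y = inner (W$y) x - Max {inner (W$k) x | k. k \<noteq> y}"

definition mstar :: "('d::finite,'k::finite) wmat \<Rightarrow> real^'d \<Rightarrow> real" where
  "mstar W x = Max (range (margin W x))"

definition is_argmax_rule :: "(('d::finite,'k::finite) wmat \<Rightarrow> real^'d \<Rightarrow> 'k) \<Rightarrow> bool" where
  "is_argmax_rule sel \<longleftrightarrow> (\<forall>W x k. inner (W$k) x \<le> inner (W$(sel W x)) x)"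

definition is_argmax_other_rule :: "(('d::finite,'k::finite) wmat \<Rightarrow> real^'d \<Rightarrow> 'k \<Rightarrow> 'k) \<Rightarrow> bool" where
  "is_argmax_other_rule sel2 \<longleftrightarrow>
     (\<forall>W x y. sel2 W x y \<noteq> y \<and> (\<forall>k. k \<noteq> y \<longrightarrow> inner (W$k) x \<le> inner (W$(sel2 W x y)) x))"

definition gap_map :: "real \<Rightarrow> ('d::finite,'k::finite) wmat \<Rightarrow> real^'d \<Rightarrow> real" where
  "gap_map beta W x = 1 - max (if mstar W x > beta then 1 else 0) (mstar W x)"

text \<open>Prediction distribution p'_t = (1 - c) e_{y*} + c (1/K) 1, with c = max{a_t, gamma}.\<close>
definition pdist :: "(('d::finite,'k::finite) wmat \<Rightarrow> real^'d \<Rightarrow> 'k) \<Rightarrow> real \<Rightarrow> real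
                     \<Rightarrow> ('d,'k) wmat \<Rightarrow> real^'d \<Rightarrow> 'k pmf" where
  "pdist sel gam a W x =
     bind_pmf (bernoulli_pmf (max a gam))
       (\<lambda>b. if b then pmf_of_set UNIV else return_pmf (sel W x))"

text \<open>Bandit multiclass hinge loss l_t evaluated at U (y* and m* are computed from W = W_t).\<close>
definition bloss :: "real \<Rightarrow> (('d::finite,'k::finite) wmat \<Rightarrow> real^'d \<Rightarrow> 'k) \<Rightarrow> ('d,'k) wmat
                     \<Rightarrow> real^'d \<Rightarrow> 'k \<Rightarrow> 'k \<Rightarrow> real \<Rightarrow> ('d,'k) wmat \<Rightarrow> real" where
  "bloss beta sel W x y y' p U =
     (if y' = sel W x \<and> sel W x = y \<and> mstar W x > beta then 0
      else (if y' = y then 1 / p else 0) * max (1 - margin U x y) 0)"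

definition bgrad :: "real \<Rightarrow> (('d::finite,'k::finite) wmat \<Rightarrow> real^'d \<Rightarrow> 'k)
                     \<Rightarrow> (('d,'k) wmat \<Rightarrow> real^'d \<Rightarrow> 'k \<Rightarrow> 'k) \<Rightarrow> ('d,'k) wmat
                     \<Rightarrow> real^'d \<Rightarrow> 'k \<Rightarrow> 'k \<Rightarrow> real \<Rightarrow> ('d,'k) wmat" where
  "bgrad beta sel sel2 W x y y' p =
     (if y' = sel W x \<and> sel W x = y \<and> mstar W x > beta then 0
      else if y' = y \<and> 1 - margin W x y > 0
        then (1 / p) *\<^sub>R (\<chi> k. ((if k = sel2 W x y then 1 else 0) - (if k = y then 1 else 0)) *\<^sub>R x)
        else 0)"

definition proj_step :: "real \<Rightarrow> real \<Rightarrow> ('d::finite,'k::finite) wmat \<Rightarrow> ('d,'k) wmat \<Rightarrow> ('d,'k) wmat" where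
  "proj_step eta D W g =
     (SOME V. norm V \<le> D \<and>
        (\<forall>V'. norm V' \<le> D \<longrightarrow>
           eta * inner g V + (norm (V - W))\<^sup>2 / 2 \<le> eta * inner g V' + (norm (V' - W))\<^sup>2 / 2))"

text \<open>Iterates: Wt ... h t is W_{t+1} (0-indexed rounds) given the learner's predictions h
  (h ! t is the prediction of round t, env (take t h) = (y_t, x_t)).\<close>
primrec Wt :: "('k::finite list \<Rightarrow> 'k \<times> (real^'d::finite)) \<Rightarrow> (('d,'k) wmat \<Rightarrow> real^'d \<Rightarrow> 'k)
               \<Rightarrow> (('d,'k) wmat \<Rightarrow> real^'d \<Rightarrow> 'k \<Rightarrow> 'k) \<Rightarrow> real \<Rightarrow> real \<Rightarrow> real \<Rightarrow> real
               \<Rightarrow> 'k list \<Rightarrow> nat \<Rightarrow> ('d,'k) wmat" where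
  "Wt env sel sel2 beta gam eta D h 0 = 0"
| "Wt env sel sel2 beta gam eta D h (Suc t) =
     (let W = Wt env sel sel2 beta gam eta D h t;
          y = fst (env (take t h)); x = snd (env (take t h));
          P = pdist sel gam (gap_map beta W x) W x;
          y' = h ! t
      in proj_step eta D W (bgrad beta sel sel2 W x y y' (pmf P y')))"

definition Pt :: "('k::finite list \<Rightarrow> 'k \<times> (real^'d::finite)) \<Rightarrow> (('d,'k) wmat \<Rightarrow> real^'d \<Rightarrow> 'k)
               \<Rightarrow> (('d,'k) wmat \<Rightarrow> real^'d \<Rightarrow> 'k \<Rightarrow> 'k) \<Rightarrow> real \<Rightarrow> real \<Rightarrow> real \<Rightarrow> real
               \<Rightarrow> 'k list \<Rightarrow> nat \<Rightarrow> 'k pmf" where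
  "Pt env sel sel2 beta gam eta D h t =
     (let W = Wt env sel sel2 beta gam eta D h t; x = snd (env (take t h))
      in pdist sel gam (gap_map beta W x) W x)"

primrec hist :: "('k::finite list \<Rightarrow> 'k \<times> (real^'d::finite)) \<Rightarrow> (('d,'k) wmat \<Rightarrow> real^'d \<Rightarrow> 'k)
               \<Rightarrow> (('d,'k) wmat \<Rightarrow> real^'d \<Rightarrow> 'k \<Rightarrow> 'k) \<Rightarrow> real \<Rightarrow> real \<Rightarrow> real \<Rightarrow> real
               \<Rightarrow> nat \<Rightarrow> 'k list pmf" where
  "hist env sel sel2 beta gam eta D 0 = return_pmf []"
| "hist env sel sel2 beta gam eta D (Suc t) =
     bind_pmf (hist env sel sel2 beta gam eta D t)
       (\<lambda>h. map_pmf (\<lambda>y'. h @ [y']) (Pt env sel sel2 beta gam eta D h t))"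

definition loss_t :: "('k::finite list \<Rightarrow> 'k \<times> (real^'d::finite)) \<Rightarrow> (('d,'k) wmat \<Rightarrow> real^'d \<Rightarrow> 'k)
               \<Rightarrow> (('d,'k) wmat \<Rightarrow> real^'d \<Rightarrow> 'k \<Rightarrow> 'k) \<Rightarrow> real \<Rightarrow> real \<Rightarrow> real \<Rightarrow> real
               \<Rightarrow> 'k list \<Rightarrow> nat \<Rightarrow> ('d,'k) wmat \<Rightarrow> real" where
  "loss_t env sel sel2 beta gam eta D h t U =
     (let W = Wt env sel sel2 beta gam eta D h t;
          y = fst (env (take t h)); x = snd (env (take t h)); y' = h ! t
      in bloss beta sel W x y y' (pmf (Pt env sel sel2 beta gam eta D h t) y') U)"

end

theory Submission
  imports Defs
begin


lemma ar1:
  fixes K g E m h c :: real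
  assumes K: "K \<ge> 2" and g: "0 < g" "g \<le> 1" and E: "0 \<le> E" "E \<le> g*(K-1)/K^3"
    and m: "0 \<le> m" "m \<le> 1/K" and c: "c = max (1-m) g" and h: "h \<ge> 1 + m"
  shows "1 - c/K - h + E/(c/K) \<le> g*(K-1)/K"
proof -
  have "1 - m \<ge> (K-1)/K" using m K by (simp add: field_simps)
  hence c1: "c \<ge> (K-1)/K" using c by linarith
  have cp: "c > 0" using c g by auto
  have "E/(c/K) \<le> g/K"
  proof -
    have "E \<le> g*(K-1)/K^3" by fact
    also have "\<dots> = (g/K) * ((K-1)/K) / K" using K by (simp add: field_simps power3_eq_cube)
    also have "\<dots> \<le> (g/K) * c / K" using c1 g K by (intro divide_right_mono mult_left_mono) auto
    finally show ?thesis using cp K by (simp add: field_simps)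
  qed
  moreover have "g \<le> c" using c by simp
  moreover have "0 \<le> g*(K-1)/K" using g K by simp
  ultimately show ?thesis using h m K by (smt (verit, ccfv_SIG) divide_right_mono)
qed

lemma ar2:
  fixes K g E m h :: real
  assumes K: "K \<ge> 2" and g: "0 < g" "g \<le> 1" and E: "0 \<le> E" "E \<le> g*(K-1)/K^3"
    and m: "m > 1/K" and h: "h \<ge> 1 + m"
  shows "1 - g/K - h + E/(g/K) \<le> g*(K-1)/K"
proof -
  have "E/(g/K) \<le> (K-1)/K^2"
  proof -
    have "g*(K-1)/K^3 = ((K-1)/K^2) * (g/K)" by (simp add: field_simps power3_eq_cube power2_eq_square)
    hence "E \<le> ((K-1)/K^2) * (g/K)" using E by linarith
    moreover have "g/K > 0" using g K by simp
    ultimately show ?thesis using pos_divide_le_eq[of "g/K" E "(K-1)/K^2"] by linarith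
  qed
  moreover have "(K-1)/K^2 \<le> 1/K" using K by (simp add: field_simps power2_eq_square)
  moreover have "0 \<le> g/K" "0 \<le> g*(K-1)/K" using g K by auto
  ultimately show ?thesis using h m by linarith
qed

lemma ar3:
  fixes K g E m c p :: real
  assumes K: "K \<ge> 2" and g: "0 < g" "g \<le> 1" and E: "0 \<le> E" "E \<le> g*(K-1)/K^3"
    and m: "0 \<le> m" "m \<le> 1/K" and c: "c = max (1-m) g" and p: "p = c/K + (1-c)"
  shows "1 - p - (1-m) + E/p \<le> g*(K-1)/K"
proof -
  have c1: "c \<le> 1" using c m g by auto
  have p1: "p = 1 - c*((K-1)/K)" using p K by (simp add: field_simps)
  have "c*((K-1)/K) \<le> (K-1)/K" using c1 K g by (intro mult_left_le_one_le) (auto simp: c)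
  moreover have "(K-1)/K = 1 - 1/K" using K by (simp add: field_simps)
  ultimately have pK: "p \<ge> 1/K" using p1 by linarith
  have pp: "p > 0" using pK K by (smt (verit) divide_pos_pos)
  have Ep: "E/p \<le> g*(K-1)/K^2"
  proof -
    have "g*(K-1)/K^3 = (g*(K-1)/K^2) * (1/K)" by (simp add: field_simps power3_eq_cube power2_eq_square)
    hence "E \<le> (g*(K-1)/K^2) * (1/K)" using E by linarith
    also have "\<dots> \<le> (g*(K-1)/K^2) * p" using pK g K by (intro mult_left_mono) auto
    finally show ?thesis using pp by (simp add: pos_divide_le_eq)
  qed
  have 1: "1 - p = c*(K-1)/K" using p K by (simp add: field_simps)
  show ?thesis
  proof (cases "c = g")
    case True
    have "g*(K-1)/K^2 \<le> 1*(K-1)/K^2" using g K by (intro divide_right_mono mult_right_mono) auto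
    also have "\<dots> \<le> (K-1)/K"
    proof -
      have "K*1 \<le> K*K" using K by (intro mult_left_mono) auto
      thus ?thesis using K by (simp only: mult_1) (intro divide_left_mono, auto simp: power2_eq_square)
    qed
    finally have "g*(K-1)/K^2 \<le> (K-1)/K" .
    moreover have "(K-1)/K \<le> 1 - m" using m K by (simp add: field_simps)
    moreover have "1 - p = g*(K-1)/K" using 1 True by simp
    ultimately show ?thesis using Ep by linarith
  next
    case False
    hence cm: "c = 1 - m" using c by auto
    have "c*(K-1)/K - (1-m) = -(1-m)/K" unfolding cm using K by (simp add: field_simps)
    also have "\<dots> \<le> -(K-1)/K^2" using m K by (simp add: field_simps power2_eq_square)
    finally have "c*(K-1)/K - (1-m) \<le> -(K-1)/K^2" .
    moreover have "g*(K-1)/K^2 \<le> 1*(K-1)/K^2" using g K by (intro divide_right_mono mult_right_mono) auto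
    moreover have "0 \<le> g*(K-1)/K" using g K by simp
    ultimately show ?thesis using 1 Ep by linarith
  qed
qed




lemma final_arith:
  fixes K X D T \<beta> \<gamma> \<eta> :: real
  assumes K: "K \<ge> 2" and X: "X > 0" and D: "D > 0" and T: "T \<ge> 1"
    and b: "\<beta> = 1/K"
    and g: "\<gamma> = min 1 (sqrt (K^3 * X^2 * D^2 / (2 * (1 - \<beta>) * (K - 1) * T)))"
    and e: "\<eta> = \<gamma> * (1 - \<beta>) / (K^2 * X^2)"
  shows "T * (\<gamma>*(K-1)/K) + D^2/(2*\<eta>) \<le> max (K^3 * X^2 * D^2 / (K - 1)) (2 * K * X * D * sqrt (T / 2))"
proof -
  define A where "A = D^2*K^3*X^2/(2*(K-1))"
  define B where "B = T*(K-1)/K"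
  have b1: "1 - \<beta> = (K-1)/K" using b K by (simp add: field_simps)
  have A0: "A > 0" unfolding A_def using K X D by simp
  have B0: "B > 0" unfolding B_def using K T by simp
  have Q: "K^3 * X^2 * D^2 / (2 * (1 - \<beta>) * (K - 1) * T) = A / B"
    unfolding A_def B_def b1 using K T by (simp add: field_simps power2_eq_square power3_eq_cube)
  have gp: "\<gamma> > 0" using g Q A0 B0 by simp
  have De: "D^2/(2*\<eta>) = A / \<gamma>"
    unfolding e b1 A_def using K X D gp by (simp add: field_simps power2_eq_square power3_eq_cube)
  have Tg: "T * (\<gamma>*(K-1)/K) = B * \<gamma>" unfolding B_def by (simp add: field_simps)
  show ?thesis
  proof (cases "A / B \<ge> 1")
    case True
    hence "\<gamma> = 1" using g Q by simp
    moreover have "B \<le> A" using True B0 by (simp add: le_divide_eq)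
    ultimately have "T * (\<gamma>*(K-1)/K) + D^2/(2*\<eta>) \<le> 2 * A" using De Tg by simp
    also have "2 * A = K^3 * X^2 * D^2 / (K - 1)" unfolding A_def using K by (simp add: field_simps)
    finally show ?thesis by simp
  next
    case False
    have "sqrt (A/B) < 1" using False by simp
    hence "\<gamma> = sqrt (A/B)" unfolding g Q by simp
    hence gs: "\<gamma> = sqrt A / sqrt B" by (simp add: real_sqrt_divide)
    have sA: "sqrt A > 0" "sqrt B > 0" using A0 B0 by auto
    have hB: "sqrt B * sqrt B = B" and hA: "sqrt A * sqrt A = A" using A0 B0 by simp_all
    have "B * \<gamma> = (sqrt B * sqrt B) * (sqrt A / sqrt B)" unfolding gs hB ..
    also have "\<dots> = sqrt A * sqrt B" using sA by (simp add: field_simps)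
    finally have 1: "B * \<gamma> = sqrt A * sqrt B" .
    have "A / \<gamma> = (sqrt A * sqrt A) / (sqrt A / sqrt B)" unfolding gs hA ..
    also have "\<dots> = sqrt A * sqrt B" using sA by (simp add: field_simps)
    finally have 2: "A / \<gamma> = sqrt A * sqrt B" .
    note 1 2
    moreover have "sqrt A * sqrt B = K * X * D * sqrt (T/2)"
    proof -
      have "A * B = (K*X*D)^2 * (T/2)" unfolding A_def B_def using K by (simp add: field_simps power2_eq_square power3_eq_cube)
      have "sqrt A * sqrt B = sqrt (A * B)" by (simp add: real_sqrt_mult)
      also have "\<dots> = sqrt ((K*X*D)^2 * (T/2))" using \<open>A * B = _\<close> by simp
      also have "\<dots> = sqrt ((K*X*D)^2) * sqrt (T/2)" by (rule real_sqrt_mult)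
      finally have "sqrt A * sqrt B = sqrt ((K*X*D)^2) * sqrt (T/2)" .
      thus ?thesis using K X D by simp
    qed
    ultimately have "T * (\<gamma>*(K-1)/K) + D^2/(2*\<eta>) = 2 * K * X * D * sqrt (T / 2)" using De Tg by simp
    thus ?thesis by simp
  qed
qed



lemma fin_set_img: "finite {inner (W$k) x | k. k \<noteq> (y::'k::finite)}"
proof -
  have "{inner (W$k) x | k. k \<noteq> y} = (\<lambda>k. inner (W$k) x) ` {k. k \<noteq> y}" by auto
  thus ?thesis by simp
qed

lemma margin_sel2:
  fixes W :: "('d::finite,'k::finite) wmat"
  assumes "is_argmax_other_rule sel2"
  shows "margin W x y = inner (W$y) x - inner (W$(sel2 W x y)) x"
proof -
  have "Max {inner (W$k) x | k. k \<noteq> y} = inner (W$(sel2 W x y)) x"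
    apply (rule Max_eqI[OF fin_set_img])
    using assms unfolding is_argmax_other_rule_def by auto
  thus ?thesis unfolding margin_def by simp
qed

lemma margin_le:
  fixes U :: "('d::finite,'k::finite) wmat"
  assumes "k \<noteq> y"
  shows "margin U x y \<le> inner (U$y) x - inner (U$k) x"
proof -
  have "inner (U$k) x \<le> Max {inner (U$k) x | k. k \<noteq> y}"
    apply (rule Max_ge[OF fin_set_img]) using assms by auto
  thus ?thesis unfolding margin_def by simp
qed

lemma margin_not_sel:
  fixes W :: "('d::finite,'k::finite) wmat"
  assumes "is_argmax_rule sel" "y \<noteq> sel W x"
  shows "margin W x y = inner (W$y) x - inner (W$(sel W x)) x"
proof -
  have "Max {inner (W$k) x | k. k \<noteq> y} = inner (W$(sel W x)) x"
    apply (rule Max_eqI[OF fin_set_img])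
    using assms unfolding is_argmax_rule_def by auto
  thus ?thesis unfolding margin_def by simp
qed

lemma mstar_facts:
  fixes W :: "('d::finite,'k::finite) wmat" and sel :: "('d,'k) wmat \<Rightarrow> real^'d \<Rightarrow> 'k"
    and sel2 :: "('d,'k) wmat \<Rightarrow> real^'d \<Rightarrow> 'k \<Rightarrow> 'k"
  assumes s: "is_argmax_rule sel" and s2: "is_argmax_other_rule sel2"
  shows "mstar W x = margin W x (sel W x)" "mstar W x \<ge> 0"
    "\<And>y. y \<noteq> sel W x \<Longrightarrow> margin W x y \<le> - mstar W x"
proof -
  have m0: "margin W x (sel W x) \<ge> 0"
    using margin_sel2[OF s2, of W x "sel W x"] s unfolding is_argmax_rule_def by simp
  have mk: "margin W x k \<le> margin W x (sel W x)" for k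
  proof (cases "k = sel W x")
    case False
    then show ?thesis using m0 margin_not_sel[OF s False] s unfolding is_argmax_rule_def
      by (metis diff_le_0_iff_le order.trans)
  qed simp
  show ms: "mstar W x = margin W x (sel W x)"
    unfolding mstar_def by (rule Max_eqI) (use mk in auto)
  show "mstar W x \<ge> 0" using ms m0 by simp
  fix y assume y: "y \<noteq> sel W x"
  have "inner (W$y) x \<le> inner (W$(sel2 W x (sel W x))) x"
    using s2 y unfolding is_argmax_other_rule_def by auto
  thus "margin W x y \<le> - mstar W x"
    using ms margin_not_sel[OF s y] margin_sel2[OF s2, of W x "sel W x"] by simp
qed

lemma pmf_pdist:
  fixes W :: "('d::finite,'k::finite) wmat"
  assumes "0 \<le> max a g" "max a g \<le> 1"
  shows "pmf (pdist sel g a W x) k = max a g / real CARD('k) + (1 - max a g) * (if k = sel W x then 1 else 0)"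
  unfolding pdist_def pmf_bind using assms by (simp add: integral_bernoulli_pmf)

lemma sum_coef_sq:
  assumes "a \<noteq> (b::'k::finite)"
  shows "(\<Sum>i\<in>UNIV. ((if i = a then 1 else 0) - (if i = b then 1 else 0))^2) = (2::real)"
proof -
  have "\<And>i. ((if i = a then 1 else 0) - (if i = b then 1 else 0))^2 = (if i = a then 1 else 0) + (if i = b then 1 else (0::real))"
    using assms by auto
  hence "(\<Sum>i\<in>UNIV. ((if i = a then 1 else 0) - (if i = b then 1 else 0))^2) =
     (\<Sum>i\<in>UNIV. (if i = a then 1 else 0) + (if i = b then 1 else (0::real)))" by simp
  also have "\<dots> = 2" by (simp add: sum.distrib)
  finally show ?thesis .
qed

lemma norm_gvec:
  fixes x :: "real^'d::finite"
  assumes "a \<noteq> (b::'k::finite)"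
  shows "(norm ((\<chi> k. ((if k = a then 1 else 0) - (if k = b then 1 else 0)) *\<^sub>R x) :: ('d,'k) wmat))^2 = 2 * (norm x)^2"
proof -
  have "(norm ((\<chi> k. ((if k = a then 1 else 0) - (if k = b then 1 else 0)) *\<^sub>R x) :: ('d,'k) wmat))^2
     = (\<Sum>i\<in>UNIV. (norm (((if i = a then 1 else 0) - (if i = b then 1 else 0)) *\<^sub>R x))^2)"
    unfolding norm_vec_def L2_set_def by (simp add: sum_nonneg)
  also have "\<dots> = (\<Sum>i\<in>UNIV. ((if i = a then 1 else 0) - (if i = b then 1 else 0))^2 * (norm x)^2)"
    by (simp add: power_mult_distrib)
  also have "\<dots> = 2 * (norm x)^2" using sum_coef_sq[OF assms] by (simp add: sum_distrib_right[symmetric])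
  finally show ?thesis .
qed

lemma gap_le1:
  fixes W :: "('d::finite,'k::finite) wmat" and sel :: "('d,'k) wmat \<Rightarrow> real^'d \<Rightarrow> 'k"
    and sel2 :: "('d,'k) wmat \<Rightarrow> real^'d \<Rightarrow> 'k \<Rightarrow> 'k"
  assumes "is_argmax_rule sel" "is_argmax_other_rule sel2"
  shows "gap_map b W x \<le> 1"
  using mstar_facts(2)[OF assms, of W x] unfolding gap_map_def by auto




lemma one_round:
  fixes W :: "('d::finite,'k::finite) wmat" and x :: "real^'d"
    and sel :: "('d,'k) wmat \<Rightarrow> real^'d \<Rightarrow> 'k"
    and sel2 :: "('d,'k) wmat \<Rightarrow> real^'d \<Rightarrow> 'k \<Rightarrow> 'k"
  assumes s: "is_argmax_rule sel" and s2: "is_argmax_other_rule sel2"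
    and card: "CARD('k) \<ge> 2" and Kdef: "K = real CARD('k)" and bdef: "\<beta> = 1/K"
    and g: "0 < \<gamma>" "\<gamma> \<le> 1" and eta: "0 \<le> \<eta>" "\<eta> * X^2 \<le> \<gamma>*(K-1)/K^3"
    and nx: "norm x \<le> X"
  defines "P \<equiv> pdist sel \<gamma> (gap_map \<beta> W x) W x"
  shows "measure_pmf.expectation P (\<lambda>y'. (if y' \<noteq> y then 1 else 0)
            - bloss \<beta> sel W x y y' (pmf P y') W
            + \<eta>/2 * (norm (bgrad \<beta> sel sel2 W x y y' (pmf P y')))^2) \<le> \<gamma>*(K-1)/K"
proof -
  define m where "m = mstar W x"
  define ys where "ys = sel W x"
  define a where "a = gap_map \<beta> W x"
  define c where "c = max a \<gamma>"
  have K2: "K \<ge> 2" using card Kdef by simp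
  have m0: "m \<ge> 0" using mstar_facts(2)[OF s s2] m_def by simp
  have a1: "a \<le> 1" using gap_le1[OF s s2] a_def by simp
  have c01: "0 \<le> c" "c \<le> 1" "\<gamma> \<le> c" using a1 g c_def by auto
  have pk: "pmf P k = c/K + (1-c) * (if k = ys then 1 else 0)" for k
    unfolding P_def using pmf_pdist[of a \<gamma> sel W x k] c01 by (simp add: c_def a_def ys_def Kdef)
  define f where "f = (\<lambda>y'. (if y' \<noteq> y then 1 else 0)
            - bloss \<beta> sel W x y y' (pmf P y') W
            + \<eta>/2 * (norm (bgrad \<beta> sel sel2 W x y y' (pmf P y')))^2)"
  define p where "p = pmf P y"
  have fk: "f k = 1" if kn: "k \<noteq> y" for k
  proof -
    from kn have "bloss \<beta> sel W x y k (pmf P k) W = 0" "bgrad \<beta> sel sel2 W x y k (pmf P k) = 0"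
      by (simp_all add: bloss_def bgrad_def)
    thus ?thesis using kn unfolding f_def by simp
  qed
  have "measure_pmf.expectation P f = (\<Sum>k\<in>UNIV. f k * pmf P k)"
    by (rule integral_measure_pmf_real) auto
  also have "\<dots> = (\<Sum>k\<in>UNIV. pmf P k + (if k = y then (f y - 1) * pmf P k else 0))"
    by (rule sum.cong) (auto simp: fk algebra_simps)
  also have "\<dots> = 1 + (f y - 1) * p"
    by (simp add: sum.distrib sum_pmf_eq_1 p_def)
  finally have E: "measure_pmf.expectation P f = 1 - p + p * f y" by (simp add: algebra_simps)
  have E0: "\<eta> * X^2 \<ge> 0" using eta by simp
  show ?thesis
  proof (cases "y = ys \<and> m > \<beta>")
    case True
    have "f y = 0" unfolding f_def using True by (simp add: bloss_def bgrad_def ys_def m_def)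
    moreover have "a \<le> 0" using True unfolding a_def gap_map_def m_def by auto
    hence "c = \<gamma>" using g c_def by auto
    ultimately have "measure_pmf.expectation P f = 1 - (\<gamma>/K + (1-\<gamma>))" using E True by (simp add: p_def pk)
    also have "\<dots> = \<gamma>*(K-1)/K" using K2 by (simp add: field_simps)
    finally show ?thesis unfolding f_def by (rule eq_refl)
  next
    case False
    define h where "h = max (1 - margin W x y) 0"
    have pc: "p \<ge> c/K" using pk[of y] c01 unfolding p_def by auto
    have pp: "p > 0" using pc c01 g K2
      by (smt (verit, best) divide_pos_pos)
    have nc3: "\<not> (y = sel W x \<and> sel W x = y \<and> mstar W x > \<beta>)" using False ys_def m_def by auto
    have bl: "bloss \<beta> sel W x y y p W = (1/p) * h"
      unfolding bloss_def h_def if_not_P[OF nc3] by (simp only: simp_thms if_True)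
    have bg: "(norm (bgrad \<beta> sel sel2 W x y y p))^2 \<le> (1/p)^2 * (2 * X^2)"
    proof -
      have nx2: "(norm x)^2 \<le> X^2" using nx by (simp add: power_mono)
      have "sel2 W x y \<noteq> y" using s2 unfolding is_argmax_other_rule_def by auto
      define G where "G = ((\<chi> k. ((if k = sel2 W x y then 1 else 0) - (if k = y then 1 else 0)) *\<^sub>R x) :: ('d,'k) wmat)"
      have nG: "(norm G)^2 = 2 * (norm x)^2" unfolding G_def by (rule norm_gvec) fact
      have bgd: "bgrad \<beta> sel sel2 W x y y p = (if 1 - margin W x y > 0 then (1/p) *\<^sub>R G else 0)"
        unfolding bgrad_def if_not_P[OF nc3] G_def[symmetric] by (simp only: simp_thms)
      have "(norm (bgrad \<beta> sel sel2 W x y y p))^2 \<le> (1/p)^2 * (norm G)^2"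
        unfolding bgd using pp by (simp add: power_divide)
      hence "(norm (bgrad \<beta> sel sel2 W x y y p))^2 \<le> (1/p)^2 * (2 * (norm x)^2)"
        using nG by simp
      also have "\<dots> \<le> (1/p)^2 * (2 * X^2)" using nx2 by (intro mult_left_mono) auto
      finally show ?thesis .
    qed
    have pf: "p * f y \<le> - h + \<eta> * X^2 / p"
    proof -
      have "p * f y = - h + p * (\<eta>/2) * (norm (bgrad \<beta> sel sel2 W x y y p))^2"
        unfolding f_def p_def[symmetric] bl using pp by (simp add: algebra_simps)
      also have "\<dots> \<le> - h + p * (\<eta>/2) * ((1/p)^2 * (2 * X^2))"
        using bg pp eta by (intro add_left_mono mult_left_mono) auto
      also have "\<dots> = - h + \<eta> * X^2 / p" using pp by (simp add: field_simps power2_eq_square)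
      finally show ?thesis .
    qed
    have Eb: "measure_pmf.expectation P f \<le> 1 - p - h + \<eta> * X^2 / p" using E pf by linarith
    have "1 - p - h + \<eta> * X^2 / p \<le> \<gamma>*(K-1)/K"
    proof (cases "y = ys")
      case True
      hence mb: "m \<le> 1/K" using False bdef by auto
      have "a = 1 - m" unfolding a_def gap_map_def m_def[symmetric] using mb m0 bdef by auto
      hence cc: "c = max (1-m) \<gamma>" using c_def by simp
      have "margin W x y = m" using True mstar_facts(1)[OF s s2] m_def ys_def by simp
      moreover have "1/K < 1" using K2 by simp
      hence "m < 1" using mb by linarith
      ultimately have hh: "h = 1 - m" unfolding h_def by simp
      have pe: "p = c/K + (1-c)" using pk[of y] True unfolding p_def by simp
      show ?thesis using ar3[OF K2 g E0 eta(2) m0 mb cc pe] hh by simp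
    next
      case nys: False
      have hm: "h \<ge> 1 + m" using mstar_facts(3)[OF s s2 nys[unfolded ys_def]] m_def h_def by simp
      have pe: "p = c/K" using pk[of y] nys unfolding p_def by simp
      show ?thesis
      proof (cases "m > \<beta>")
        case True
        have "a \<le> 0" using True unfolding a_def gap_map_def m_def by auto
        hence "c = \<gamma>" using g c_def by auto
        thus ?thesis using ar2[OF K2 g E0 eta(2) _ hm] True bdef pe by simp
      next
        case mb: False
        have "a = 1 - m" unfolding a_def gap_map_def m_def[symmetric] using mb m0 by auto
        hence cc: "c = max (1-m) \<gamma>" using c_def by simp
        show ?thesis using ar1[OF K2 g E0 eta(2) m0 _ cc hm] mb bdef pe by simp
      qed
    qed
    thus ?thesis using Eb unfolding f_def by linarith
  qed
qed




lemma nonneg_from_small: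
  fixes a b :: real
  assumes b: "b \<ge> 0" and h: "\<And>s. 0 < s \<Longrightarrow> s \<le> 1 \<Longrightarrow> 0 \<le> a + s * b"
  shows "a \<ge> 0"
proof (rule ccontr)
  assume "\<not> a \<ge> 0"
  hence a: "a < 0" by simp
  define s where "s = min 1 (-a / (2*b+1))"
  have "-a/(2*b+1) > 0" using a b by (intro divide_pos_pos) auto
  hence s0: "0 < s" using s_def by simp
  have s1: "s \<le> 1" using s_def by simp
  have "s * b \<le> (-a/(2*b+1)) * b" using b s_def by (intro mult_right_mono) auto
  also have "\<dots> \<le> -a/2"
  proof -
    have "(-a/(2*b+1)) * b = (-a) * (b/(2*b+1))" by simp
    also have "\<dots> \<le> (-a) * (1/2)" using a b by (intro mult_left_mono) (auto simp: field_simps)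
    finally show ?thesis by simp
  qed
  finally have "s * b \<le> -a/2" .
  with h[OF s0 s1] a show False by linarith
qed

lemma lin_help:
  fixes x1 x2 x3 x4 nUW nd nVW nWV Q E L :: real
  shows "0 \<le> x2 + x3 \<Longrightarrow> nUW = nd + 2*x4 + nVW \<Longrightarrow> 0 \<le> Q \<Longrightarrow> Q = E - 2*x1 + nWV \<Longrightarrow>
    nWV = nVW \<Longrightarrow> L = x1 - x2 \<Longrightarrow> x4 = x3 \<Longrightarrow> L \<le> (nUW - nd)/2 + E/2"
  by argo

lemma proj_exists:
  fixes W g :: "('d::finite,'k::finite) wmat"
  assumes "D \<ge> 0"
  shows "\<exists>V. norm V \<le> D \<and> (\<forall>V'. norm V' \<le> D \<longrightarrow>
           eta * inner g V + (norm (V - W))\<^sup>2 / 2 \<le> eta * inner g V' + (norm (V' - W))\<^sup>2 / 2)"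
proof -
  have "\<exists>V\<in>cball 0 D. \<forall>V'\<in>cball 0 D. eta * inner g V + (norm (V - W))\<^sup>2 / 2 \<le> eta * inner g V' + (norm (V' - W))\<^sup>2 / 2"
    using assms by (intro continuous_attains_inf) (auto intro!: continuous_intros)
  thus ?thesis by auto
qed

lemma proj_prop:
  fixes W g U :: "('d::finite,'k::finite) wmat"
  assumes eta: "eta > 0" and D: "D \<ge> 0" and U: "norm U \<le> D"
  shows "inner g (W - U) \<le> ((norm (U - W))\<^sup>2 - (norm (U - proj_step eta D W g))\<^sup>2) / (2*eta)
            + eta/2 * (norm g)\<^sup>2"
proof -
  define V where "V = proj_step eta D W g"
  have Vp: "norm V \<le> D \<and> (\<forall>V'. norm V' \<le> D \<longrightarrow>
           eta * inner g V + (norm (V - W))\<^sup>2 / 2 \<le> eta * inner g V' + (norm (V' - W))\<^sup>2 / 2)"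
    unfolding V_def proj_step_def by (rule someI_ex[OF proj_exists[OF D]])
  define d where "d = U - V"
  define a where "a = eta * inner g d + inner (V - W) d"
  have "a \<ge> 0"
  proof (rule nonneg_from_small[of "(norm d)\<^sup>2 / 2"])
    fix s :: real assume s: "0 < s" "s \<le> 1"
    have "V + s *\<^sub>R d = (1 - s) *\<^sub>R V + s *\<^sub>R U" unfolding d_def by (simp add: algebra_simps)
    hence "norm (V + s *\<^sub>R d) \<le> (1-s) * norm V + s * norm U"
      using s by (metis abs_of_nonneg diff_ge_0_iff_ge norm_scaleR norm_triangle_le order.refl add_mono less_imp_le)
    also have "\<dots> \<le> (1-s) * D + s * D" using Vp U s by (intro add_mono mult_left_mono) auto
    finally have "norm (V + s *\<^sub>R d) \<le> D" by (simp add: algebra_simps)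
    with Vp have "eta * inner g V + (norm (V - W))\<^sup>2 / 2 \<le> eta * inner g (V + s *\<^sub>R d) + (norm (V + s *\<^sub>R d - W))\<^sup>2 / 2"
      by blast
    moreover have "(norm (V + s *\<^sub>R d - W))\<^sup>2 = (norm (V - W))\<^sup>2 + 2 * (s * inner (V - W) d) + s^2 * (norm d)\<^sup>2"
    proof -
      have "V + s *\<^sub>R d - W = (V - W) + s *\<^sub>R d" by simp
      thus ?thesis by (simp only: power2_norm_eq_inner inner_add_left inner_add_right inner_scaleR_left inner_scaleR_right inner_commute[of d "V - W"]) (simp add: power2_eq_square algebra_simps)
    qed
    moreover have "eta * inner g (V + s *\<^sub>R d) = eta * inner g V + s * (eta * inner g d)" by (simp add: inner_add_right algebra_simps)
    moreover have "s * a = s * (eta * inner g d) + s * inner (V - W) d" unfolding a_def by (simp add: algebra_simps)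
    moreover have "s^2 * ((norm d)\<^sup>2 / 2) = (s^2 * (norm d)\<^sup>2) / 2" by simp
    ultimately have "0 \<le> s * a + s^2 * ((norm d)\<^sup>2 / 2)" by linarith
    hence "0 \<le> s * (a + s * ((norm d)\<^sup>2 / 2))" by (simp add: power2_eq_square algebra_simps)
    thus "0 \<le> a + s * ((norm d)\<^sup>2 / 2)" using s by (simp add: zero_le_mult_iff)
  qed simp
  have e1: "(norm (U - W))\<^sup>2 = (norm d)\<^sup>2 + 2 * inner d (V - W) + (norm (V - W))\<^sup>2"
  proof -
    have "U - W = d + (V - W)" unfolding d_def by simp
    thus ?thesis by (simp only: power2_norm_eq_inner inner_add_left inner_add_right inner_commute[of "V - W" d]; simp)
  qed
  have e2: "0 \<le> (norm (eta *\<^sub>R g - (W - V)))\<^sup>2" by simp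
  have e3: "(norm (eta *\<^sub>R g - (W - V)))\<^sup>2 = eta^2 * (norm g)\<^sup>2 - 2 * (eta * inner g (W - V)) + (norm (W - V))\<^sup>2"
    by (simp only: power2_norm_eq_inner inner_diff_left inner_diff_right inner_scaleR_left inner_scaleR_right inner_commute[of "W - V" g]) (simp add: power2_eq_square algebra_simps inner_commute)
  have e4: "(norm (W - V))\<^sup>2 = (norm (V - W))\<^sup>2" by (simp add: norm_minus_commute)
  have e5: "eta * inner g (W - U) = eta * inner g (W - V) - eta * inner g d" unfolding d_def by (simp add: inner_diff_right algebra_simps)
  have e6: "inner d (V - W) = inner (V - W) d" by (simp add: inner_commute)
  have "eta * inner g (W - U) \<le> ((norm (U - W))\<^sup>2 - (norm d)\<^sup>2) / 2 + (eta^2 * (norm g)\<^sup>2)/2"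
    using lin_help[OF \<open>a \<ge> 0\<close>[unfolded a_def] e1 e2 e3 e4 e5 e6] .
  hence "inner g (W - U) \<le> (((norm (U - W))\<^sup>2 - (norm d)\<^sup>2) / 2 + (eta^2 * (norm g)\<^sup>2)/2) / eta"
    using eta by (simp add: le_divide_eq mult.commute)
  also have "\<dots> = ((norm (U - W))\<^sup>2 - (norm d)\<^sup>2) / (2*eta) + eta/2 * (norm g)\<^sup>2"
    using eta by (simp add: field_simps power2_eq_square)
  finally show ?thesis unfolding d_def V_def .
qed

lemma inner_gvec:
  fixes x :: "real^'d::finite" and M :: "('d,'k::finite) wmat"
  shows "inner ((\<chi> k. ((if k = a then 1 else 0) - (if k = b then 1 else 0)) *\<^sub>R x) :: ('d,'k) wmat) M
         = inner (M$a) x - inner (M$b) x"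
proof -
  have "inner ((\<chi> k. ((if k = a then 1 else 0) - (if k = b then 1 else 0)) *\<^sub>R x) :: ('d,'k) wmat) M
     = (\<Sum>i\<in>UNIV. ((if i = a then 1 else 0) - (if i = b then 1 else 0)) * inner x (M$i))"
    unfolding inner_vec_def by (simp add: sum_distrib_left mult.assoc)
  also have "\<dots> = (\<Sum>i\<in>UNIV. (if i = a then inner x (M$i) else 0) - (if i = b then inner x (M$i) else 0))"
    by (rule sum.cong) (auto simp: algebra_simps)
  also have "\<dots> = inner (M$a) x - inner (M$b) x" by (simp add: sum_subtractf inner_commute)
  finally show ?thesis .
qed

lemma subgrad:
  fixes W U :: "('d::finite,'k::finite) wmat"
    and sel :: "('d,'k) wmat \<Rightarrow> real^'d \<Rightarrow> 'k"
    and sel2 :: "('d,'k) wmat \<Rightarrow> real^'d \<Rightarrow> 'k \<Rightarrow> 'k"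
  assumes s2: "is_argmax_other_rule sel2" and p: "p \<ge> 0"
  shows "bloss \<beta> sel W x y y' p U \<ge> bloss \<beta> sel W x y y' p W + inner (bgrad \<beta> sel sel2 W x y y' p) (U - W)"
proof (cases "(y' = sel W x \<and> sel W x = y \<and> mstar W x > \<beta>) \<or> y' \<noteq> y")
  case True
  show ?thesis
  proof (cases "y' = sel W x \<and> sel W x = y \<and> mstar W x > \<beta>")
    case c3: True
    have "bloss \<beta> sel W x y y' p U = 0" "bloss \<beta> sel W x y y' p W = 0" "bgrad \<beta> sel sel2 W x y y' p = 0"
      by (simp_all only: bloss_def bgrad_def if_P[OF c3])
    thus ?thesis by simp
  next
    case c3: False
    with True have ny: "y' \<noteq> y" by blast
    have "bloss \<beta> sel W x y y' p U = 0" "bloss \<beta> sel W x y y' p W = 0" "bgrad \<beta> sel sel2 W x y y' p = 0"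
      by (simp_all only: bloss_def bgrad_def if_not_P[OF c3] ny simp_thms if_False mult_zero_left)
    thus ?thesis by simp
  qed
next
  case False
  hence nc: "\<not> (y' = sel W x \<and> sel W x = y \<and> mstar W x > \<beta>)" and yy: "y' = y" by auto
  define G where "G = ((\<chi> k. ((if k = sel2 W x y then 1 else 0) - (if k = y then 1 else 0)) *\<^sub>R x) :: ('d,'k) wmat)"
  have bU: "bloss \<beta> sel W x y y' p Z = (1/p) * max (1 - margin Z x y) 0" for Z
    unfolding bloss_def yy if_not_P[OF nc[unfolded yy]] by (simp only: if_True simp_thms)
  have bgd: "bgrad \<beta> sel sel2 W x y y' p = (if 1 - margin W x y > 0 then (1/p) *\<^sub>R G else 0)"
    unfolding bgrad_def yy if_not_P[OF nc[unfolded yy]] G_def[symmetric] by (simp only: simp_thms)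
  have ne: "sel2 W x y \<noteq> y" using s2 unfolding is_argmax_other_rule_def by auto
  show ?thesis
  proof (cases "1 - margin W x y > 0")
    case True
    have iG: "inner G (U - W) = (inner (U$(sel2 W x y)) x - inner (W$(sel2 W x y)) x) - (inner (U$y) x - inner (W$y) x)"
      unfolding G_def inner_gvec by (simp add: inner_diff_left)
    have mW: "margin W x y = inner (W$y) x - inner (W$(sel2 W x y)) x" by (rule margin_sel2[OF s2])
    have mU: "margin U x y \<le> inner (U$y) x - inner (U$(sel2 W x y)) x" by (rule margin_le[OF ne])
    have "1 - margin W x y + inner G (U - W) \<le> max (1 - margin U x y) 0" using iG mW mU by simp
    hence "(1/p) * (1 - margin W x y + inner G (U - W)) \<le> (1/p) * max (1 - margin U x y) 0"
      using p by (intro mult_left_mono) auto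
    thus ?thesis unfolding bU bgd using True by (simp add: algebra_simps)
  next
    case False
    thus ?thesis unfolding bU bgd using p by simp
  qed
qed




lemma integral_bind_fin:
  fixes g :: "'b \<Rightarrow> real"
  assumes fM: "finite (set_pmf M)" and fN: "\<And>x. x \<in> set_pmf M \<Longrightarrow> finite (set_pmf (N x))"
  shows "measure_pmf.expectation (bind_pmf M N) g = measure_pmf.expectation M (\<lambda>x. measure_pmf.expectation (N x) g)"
proof -
  define B where "B = (\<Union>x\<in>set_pmf M. set_pmf (N x))"
  have fB: "finite B" unfolding B_def by (rule finite_UN_I[OF fM fN])
  have "measure_pmf.expectation (bind_pmf M N) g = (\<Sum>z\<in>B. g z * pmf (bind_pmf M N) z)"
    by (rule integral_measure_pmf_real[OF fB]) (auto simp: B_def)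
  also have "\<dots> = (\<Sum>z\<in>B. g z * (\<Sum>x\<in>set_pmf M. pmf (N x) z * pmf M x))"
    by (rule sum.cong[OF refl]) (simp add: pmf_bind integral_measure_pmf_real[OF fM])
  also have "\<dots> = (\<Sum>x\<in>set_pmf M. (\<Sum>z\<in>B. g z * pmf (N x) z) * pmf M x)"
    by (simp add: sum_distrib_left sum_distrib_right mult.assoc sum.swap[of _ B])
  also have "\<dots> = (\<Sum>x\<in>set_pmf M. measure_pmf.expectation (N x) g * pmf M x)"
  proof (rule sum.cong[OF refl])
    fix x assume x: "x \<in> set_pmf M"
    have "measure_pmf.expectation (N x) g = (\<Sum>z\<in>B. g z * pmf (N x) z)"
      by (rule integral_measure_pmf_real[OF fB]) (use x in \<open>auto simp: B_def\<close>)
    thus "(\<Sum>z\<in>B. g z * pmf (N x) z) * pmf M x = measure_pmf.expectation (N x) g * pmf M x" by simp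
  qed
  also have "\<dots> = measure_pmf.expectation M (\<lambda>x. measure_pmf.expectation (N x) g)"
    by (rule integral_measure_pmf_real[symmetric]) (auto simp: fM)
  finally show ?thesis .
qed

lemma exp_mono_fin:
  fixes f g :: "'a \<Rightarrow> real"
  assumes "finite (set_pmf M)" "\<And>x. x \<in> set_pmf M \<Longrightarrow> f x \<le> g x"
  shows "measure_pmf.expectation M f \<le> measure_pmf.expectation M g"
  by (rule integral_mono_AE) (use assms in \<open>auto simp: integrable_measure_pmf_finite AE_measure_pmf_iff\<close>)

lemma exp_add_const:
  fixes f :: "'a \<Rightarrow> real"
  assumes "finite (set_pmf M)"
  shows "measure_pmf.expectation M (\<lambda>x. f x + c) = measure_pmf.expectation M f + c"
  using assms by (simp add: integrable_measure_pmf_finite)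

lemma exp_diff:
  fixes f g :: "'a \<Rightarrow> real"
  assumes "finite (set_pmf M)"
  shows "measure_pmf.expectation M (\<lambda>x. f x - g x) = measure_pmf.expectation M f - measure_pmf.expectation M g"
  using assms by (simp add: integrable_measure_pmf_finite)

context
  fixes env :: "'k::finite list \<Rightarrow> 'k \<times> (real^'d::finite)"
    and sel :: "('d,'k) wmat \<Rightarrow> real^'d \<Rightarrow> 'k"
    and sel2 :: "('d,'k) wmat \<Rightarrow> real^'d \<Rightarrow> 'k \<Rightarrow> 'k"
    and \<beta> \<gamma> \<eta> D :: real
begin

lemma Wt_append: "t \<le> length h \<Longrightarrow> Wt env sel sel2 \<beta> \<gamma> \<eta> D (h @ zs) t = Wt env sel sel2 \<beta> \<gamma> \<eta> D h t"
  by (induction t) (auto simp: Let_def nth_append)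

lemma Pt_append: "t \<le> length h \<Longrightarrow> Pt env sel sel2 \<beta> \<gamma> \<eta> D (h @ zs) t = Pt env sel sel2 \<beta> \<gamma> \<eta> D h t"
  unfolding Pt_def by (simp add: Wt_append)

lemma len_hist: "h \<in> set_pmf (hist env sel sel2 \<beta> \<gamma> \<eta> D n) \<Longrightarrow> length h = n"
  by (induction n arbitrary: h) auto

lemma fin_hist: "finite (set_pmf (hist env sel sel2 \<beta> \<gamma> \<eta> D n))"
  by (induction n) (auto intro: finite_subset[OF subset_UNIV])

definition qq :: "'k list \<Rightarrow> nat \<Rightarrow> real" where
  "qq h t = (let W = Wt env sel sel2 \<beta> \<gamma> \<eta> D h t;
          y = fst (env (take t h)); x = snd (env (take t h)); y' = h ! t;
          p = pmf (Pt env sel sel2 \<beta> \<gamma> \<eta> D h t) y'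
      in (if y' \<noteq> y then 1 else 0) - bloss \<beta> sel W x y y' p W
         + \<eta>/2 * (norm (bgrad \<beta> sel sel2 W x y y' p))\<^sup>2)"

lemma qq_append: "t < length h \<Longrightarrow> qq (h @ zs) t = qq h t"
  unfolding qq_def using Wt_append[of t h zs] Pt_append[of t h zs] by (simp add: nth_append)

lemma qq_last: "length h = n \<Longrightarrow> qq (h @ [y']) n =
   (let W = Wt env sel sel2 \<beta> \<gamma> \<eta> D h n; y = fst (env h); x = snd (env h);
        P = pdist sel \<gamma> (gap_map \<beta> W x) W x
    in (if y' \<noteq> y then 1 else 0) - bloss \<beta> sel W x y y' (pmf P y') W
         + \<eta>/2 * (norm (bgrad \<beta> sel sel2 W x y y' (pmf P y')))\<^sup>2)"
proof -
  assume len: "length h = n"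
  have t: "take n (h@[y']) = h" "(h@[y'])!n = y'" using len by auto
  have le: "n \<le> length h" using len by simp
  show ?thesis by (simp only: qq_def Let_def t Wt_append[OF le] Pt_append[OF le] Pt_def)
qed

lemma exp_qq:
  assumes s: "is_argmax_rule sel" and s2: "is_argmax_other_rule sel2"
    and card: "CARD('k) \<ge> 2" and Kdef: "K = real CARD('k)" and bdef: "\<beta> = 1/K"
    and g: "0 < \<gamma>" "\<gamma> \<le> 1" and eta: "0 \<le> \<eta>" "\<eta> * X^2 \<le> \<gamma>*(K-1)/K^3"
    and nx: "\<forall>h. norm (snd (env h)) \<le> X"
  shows "measure_pmf.expectation (hist env sel sel2 \<beta> \<gamma> \<eta> D n) (\<lambda>h. \<Sum>t<n. qq h t) \<le> n * (\<gamma>*(K-1)/K)"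
proof (induction n)
  case 0
  then show ?case by simp
next
  case (Suc n)
  define H where "H = hist env sel sel2 \<beta> \<gamma> \<eta> D n"
  define b where "b = \<gamma>*(K-1)/K"
  have fH: "finite (set_pmf H)" unfolding H_def by (rule fin_hist)
  have "measure_pmf.expectation (hist env sel sel2 \<beta> \<gamma> \<eta> D (Suc n)) (\<lambda>h. \<Sum>t<Suc n. qq h t)
      = measure_pmf.expectation H (\<lambda>h. measure_pmf.expectation (Pt env sel sel2 \<beta> \<gamma> \<eta> D h n)
            (\<lambda>y'. \<Sum>t<Suc n. qq (h @ [y']) t))"
    unfolding hist.simps H_def[symmetric]
    by (subst integral_bind_fin) (auto simp: fH intro: finite_subset[OF subset_UNIV])
  also have "\<dots> \<le> measure_pmf.expectation H (\<lambda>h. (\<Sum>t<n. qq h t) + b)"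
  proof (rule exp_mono_fin[OF fH])
    fix h assume hH: "h \<in> set_pmf H"
    hence len: "length h = n" unfolding H_def by (rule len_hist)
    have "(\<lambda>y'. \<Sum>t<Suc n. qq (h @ [y']) t) = (\<lambda>y'. qq (h @ [y']) n + (\<Sum>t<n. qq h t))"
      using len by (auto simp: qq_append intro!: sum.cong)
    hence "measure_pmf.expectation (Pt env sel sel2 \<beta> \<gamma> \<eta> D h n) (\<lambda>y'. \<Sum>t<Suc n. qq (h @ [y']) t)
        = measure_pmf.expectation (Pt env sel sel2 \<beta> \<gamma> \<eta> D h n) (\<lambda>y'. qq (h @ [y']) n) + (\<Sum>t<n. qq h t)"
      by (simp add: exp_add_const finite_subset[OF subset_UNIV])
    also have "measure_pmf.expectation (Pt env sel sel2 \<beta> \<gamma> \<eta> D h n) (\<lambda>y'. qq (h @ [y']) n) \<le> b"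
    proof -
      have "measure_pmf.expectation (Pt env sel sel2 \<beta> \<gamma> \<eta> D h n) (\<lambda>y'. qq (h @ [y']) n) =
        measure_pmf.expectation (pdist sel \<gamma> (gap_map \<beta> (Wt env sel sel2 \<beta> \<gamma> \<eta> D h n) (snd (env h))) (Wt env sel sel2 \<beta> \<gamma> \<eta> D h n) (snd (env h)))
          (\<lambda>y'. (if y' \<noteq> fst (env h) then 1 else 0)
            - bloss \<beta> sel (Wt env sel sel2 \<beta> \<gamma> \<eta> D h n) (snd (env h)) (fst (env h)) y' (pmf (pdist sel \<gamma> (gap_map \<beta> (Wt env sel sel2 \<beta> \<gamma> \<eta> D h n) (snd (env h))) (Wt env sel sel2 \<beta> \<gamma> \<eta> D h n) (snd (env h))) y') (Wt env sel sel2 \<beta> \<gamma> \<eta> D h n)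
            + \<eta>/2 * (norm (bgrad \<beta> sel sel2 (Wt env sel sel2 \<beta> \<gamma> \<eta> D h n) (snd (env h)) (fst (env h)) y' (pmf (pdist sel \<gamma> (gap_map \<beta> (Wt env sel sel2 \<beta> \<gamma> \<eta> D h n) (snd (env h))) (Wt env sel sel2 \<beta> \<gamma> \<eta> D h n) (snd (env h))) y')))^2)"
        using len by (simp add: qq_last Let_def Pt_def)
      also have "\<dots> \<le> b" unfolding b_def
        by (rule one_round[OF s s2 card Kdef bdef g eta]) (use nx in auto)
      finally show ?thesis .
    qed
    finally show "measure_pmf.expectation (Pt env sel sel2 \<beta> \<gamma> \<eta> D h n) (\<lambda>y'. \<Sum>t<Suc n. qq (h @ [y']) t)
        \<le> (\<Sum>t<n. qq h t) + b" by simp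
  qed
  also have "\<dots> = measure_pmf.expectation H (\<lambda>h. \<Sum>t<n. qq h t) + b" by (rule exp_add_const[OF fH])
  also have "\<dots> \<le> n * b + b" using Suc.IH unfolding H_def b_def by simp
  also have "\<dots> = real (Suc n) * b" by (simp add: algebra_simps)
  finally show ?case unfolding b_def .
qed

lemma pathwise:
  assumes s2: "is_argmax_other_rule sel2" and eta: "\<eta> > 0" and D: "D \<ge> 0" and U: "norm U \<le> D"
  shows "(\<Sum>t<T. (if h ! t \<noteq> fst (env (take t h)) then 1 else 0) - loss_t env sel sel2 \<beta> \<gamma> \<eta> D h t U)
     \<le> (\<Sum>t<T. qq h t) + D^2/(2*\<eta>)"
proof -
  define a where "a = (\<lambda>t. (norm (U - Wt env sel sel2 \<beta> \<gamma> \<eta> D h t))\<^sup>2 / (2*\<eta>))"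
  have step: "(if h ! t \<noteq> fst (env (take t h)) then 1 else 0) - loss_t env sel sel2 \<beta> \<gamma> \<eta> D h t U
      \<le> qq h t + (a t - a (Suc t))" for t
  proof -
    define W where "W = Wt env sel sel2 \<beta> \<gamma> \<eta> D h t"
    define y where "y = fst (env (take t h))"
    define x where "x = snd (env (take t h))"
    define p where "p = pmf (Pt env sel sel2 \<beta> \<gamma> \<eta> D h t) (h ! t)"
    define G where "G = bgrad \<beta> sel sel2 W x y (h ! t) p"
    have WS: "Wt env sel sel2 \<beta> \<gamma> \<eta> D h (Suc t) = proj_step \<eta> D W G"
      unfolding W_def G_def p_def x_def y_def by (simp add: Let_def Pt_def)
    have L: "loss_t env sel sel2 \<beta> \<gamma> \<eta> D h t U = bloss \<beta> sel W x y (h ! t) p U"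
      unfolding loss_t_def W_def x_def y_def p_def by (simp add: Let_def)
    have Q: "qq h t = (if h ! t \<noteq> y then 1 else 0) - bloss \<beta> sel W x y (h ! t) p W + \<eta>/2 * (norm G)\<^sup>2"
      unfolding qq_def W_def x_def y_def p_def G_def by (simp add: Let_def)
    have sg: "bloss \<beta> sel W x y (h ! t) p U \<ge> bloss \<beta> sel W x y (h ! t) p W + inner G (U - W)"
      unfolding G_def by (rule subgrad[OF s2]) (simp add: p_def)
    have pr: "inner G (W - U) \<le> ((norm (U - W))\<^sup>2 - (norm (U - proj_step \<eta> D W G))\<^sup>2) / (2*\<eta>) + \<eta>/2 * (norm G)\<^sup>2"
      by (rule proj_prop[OF eta D U])
    have ai: "a t - a (Suc t) = ((norm (U - W))\<^sup>2 - (norm (U - proj_step \<eta> D W G))\<^sup>2) / (2*\<eta>)"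
      unfolding a_def WS W_def by (simp add: diff_divide_distrib)
    have "inner G (W - U) = - inner G (U - W)" by (simp add: inner_diff_right)
    thus ?thesis using L Q sg pr ai unfolding y_def by linarith
  qed
  have "(\<Sum>t<T. (if h ! t \<noteq> fst (env (take t h)) then 1 else 0) - loss_t env sel sel2 \<beta> \<gamma> \<eta> D h t U)
      \<le> (\<Sum>t<T. qq h t + (a t - a (Suc t)))" by (rule sum_mono) (rule step)
  also have "\<dots> = (\<Sum>t<T. qq h t) + (a 0 - a T)" by (simp add: sum.distrib sum_lessThan_telescope')
  also have "\<dots> \<le> (\<Sum>t<T. qq h t) + D^2/(2*\<eta>)"
  proof -
    have "a T \<ge> 0" unfolding a_def using eta by simp
    moreover have "a 0 \<le> D^2/(2*\<eta>)" unfolding a_def using eta U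
      by (simp add: divide_right_mono power_mono)
    ultimately show ?thesis by simp
  qed
  finally show ?thesis .
qed

end


theorem theorem5:
  fixes env :: "'k::finite list \<Rightarrow> 'k \<times> (real^'d::finite)"
    and sel :: "('d,'k) wmat \<Rightarrow> real^'d \<Rightarrow> 'k"
    and sel2 :: "('d,'k) wmat \<Rightarrow> real^'d \<Rightarrow> 'k \<Rightarrow> 'k"
    and X D :: real and T :: nat and U :: "('d,'k) wmat"
  assumes "CARD('k) \<ge> 2" and "X > 0" and "D > 0" and "T \<ge> 1"
    and "\<forall>h. norm (snd (env h)) \<le> X"
    and "is_argmax_rule sel" and "is_argmax_other_rule sel2"
    and "norm U \<le> D"
  defines "K \<equiv> real CARD('k)"
  defines "\<beta> \<equiv> 1 / K"
  defines "\<gamma> \<equiv> min 1 (sqrt (K^3 * X^2 * D^2 / (2 * (1 - \<beta>) * (K - 1) * real T)))"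
  defines "\<eta> \<equiv> \<gamma> * (1 - \<beta>) / (K^2 * X^2)"
  shows "measure_pmf.expectation (hist env sel sel2 \<beta> \<gamma> \<eta> D T)
           (\<lambda>h. \<Sum>t<T. if h ! t \<noteq> fst (env (take t h)) then 1 else 0)
         \<le> measure_pmf.expectation (hist env sel sel2 \<beta> \<gamma> \<eta> D T)
             (\<lambda>h. \<Sum>t<T. loss_t env sel sel2 \<beta> \<gamma> \<eta> D h t U)
           + max (K^3 * X^2 * D^2 / (K - 1)) (2 * K * X * D * sqrt (real T / 2))"
proof -
  note card = assms(1) and Xp = assms(2) and Dp = assms(3) and T1 = assms(4) and nx = assms(5)
    and s = assms(6) and s2 = assms(7) and U = assms(8)
  have Kd: "K = real CARD('k)" unfolding K_def by (rule refl)
  have bd: "\<beta> = 1 / K" unfolding \<beta>_def by (rule refl)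
  have gd: "\<gamma> = min 1 (sqrt (K^3 * X^2 * D^2 / (2 * (1 - \<beta>) * (K - 1) * real T)))" unfolding \<gamma>_def by (rule refl)
  have ed: "\<eta> = \<gamma> * (1 - \<beta>) / (K^2 * X^2)" unfolding \<eta>_def by (rule refl)
  have K2: "K \<ge> 2" using card unfolding K_def by simp
  have b1: "1 - \<beta> = (K-1)/K" unfolding \<beta>_def using K2 by (simp add: field_simps)
  have Tr: "real T \<ge> 1" using T1 by simp
  have Qp: "K^3 * X^2 * D^2 / (2 * (1 - \<beta>) * (K - 1) * real T) > 0"
    using K2 Xp Dp Tr b1 by (simp add: divide_pos_pos)
  have g0: "0 < \<gamma>" "\<gamma> \<le> 1" unfolding \<gamma>_def using Qp by auto
  have e0: "\<eta> > 0" unfolding \<eta>_def using g0 K2 Xp b1 by simp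
  have eX: "\<eta> * X^2 \<le> \<gamma>*(K-1)/K^3"
  proof -
    have "\<eta> * X^2 = \<gamma>*(K-1)/K^3" unfolding \<eta>_def b1 using Xp K2
      by (simp add: field_simps power2_eq_square power3_eq_cube)
    thus ?thesis by simp
  qed
  define H where "H = hist env sel sel2 \<beta> \<gamma> \<eta> D T"
  have fH: "finite (set_pmf H)" unfolding H_def by (rule fin_hist)
  have "measure_pmf.expectation H (\<lambda>h. \<Sum>t<T. if h ! t \<noteq> fst (env (take t h)) then 1 else 0)
      - measure_pmf.expectation H (\<lambda>h. \<Sum>t<T. loss_t env sel sel2 \<beta> \<gamma> \<eta> D h t U)
      = measure_pmf.expectation H (\<lambda>h. (\<Sum>t<T. if h ! t \<noteq> fst (env (take t h)) then 1 else 0)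
          - (\<Sum>t<T. loss_t env sel sel2 \<beta> \<gamma> \<eta> D h t U))"
    by (rule exp_diff[OF fH, symmetric])
  also have "\<dots> \<le> measure_pmf.expectation H (\<lambda>h. (\<Sum>t<T. qq env sel sel2 \<beta> \<gamma> \<eta> D h t) + D^2/(2*\<eta>))"
  proof (rule exp_mono_fin[OF fH])
    fix h
    show "(\<Sum>t<T. if h ! t \<noteq> fst (env (take t h)) then 1 else 0) - (\<Sum>t<T. loss_t env sel sel2 \<beta> \<gamma> \<eta> D h t U)
        \<le> (\<Sum>t<T. qq env sel sel2 \<beta> \<gamma> \<eta> D h t) + D^2/(2*\<eta>)"
    proof -
      have "(\<Sum>t<T. (if h ! t \<noteq> fst (env (take t h)) then 1 else 0) - loss_t env sel sel2 \<beta> \<gamma> \<eta> D h t U)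
        \<le> (\<Sum>t<T. qq env sel sel2 \<beta> \<gamma> \<eta> D h t) + D^2/(2*\<eta>)"
        by (rule pathwise[OF s2 e0 _ U]) (use Dp in simp)
      thus ?thesis by (simp add: sum_subtractf)
    qed
  qed
  also have "\<dots> = measure_pmf.expectation H (\<lambda>h. \<Sum>t<T. qq env sel sel2 \<beta> \<gamma> \<eta> D h t) + D^2/(2*\<eta>)"
    by (rule exp_add_const[OF fH])
  also have "\<dots> \<le> real T * (\<gamma>*(K-1)/K) + D^2/(2*\<eta>)"
    using exp_qq[OF s s2 card Kd bd g0 less_imp_le[OF e0] eX nx] unfolding H_def by simp
  also have "\<dots> \<le> max (K^3 * X^2 * D^2 / (K - 1)) (2 * K * X * D * sqrt (real T / 2))"
    by (rule final_arith[OF K2 Xp Dp Tr bd gd ed])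
  finally show ?thesis unfolding H_def by simp
qed

end
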